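(* Let $p \geq q$ and $n \geq 1$ be positive integers and let $B$ be a $p \times q$ matrix. Let $C$ be the $(nq+p)\times(nq+p)$ block matrix $$C=\begin{bmatrix} 0 & B & B & \cdots & B\\ B^T & 0 & 0 & \cdots & 0\\ B^T & 0 & 0 & \cdots & 0\\ \vdots & \vdots & \vdots & \ddots & \vdots\\ B^T & 0 & 0 & \cdots & 0\end{bmatrix},$$ with one block row/column of size $p$ followed by $n$ block rows/columns of size $q$ (so $B$ appears $n$ times in the first block row and $B^T$ appears $n$ times in the first block column). Let $D$ be the $(np+q)\times(np+q)$ block matrix $$D=\begin{bmatrix} 0 & B^T & B^T & \cdots & B^T\\ B & 0 & 0 & \cdots & 0\\ B & 0 & 0 & \cdots & 0\\ \vdots & \vdots & \vdots & \ddots & \vdots\\ B & 0 & 0 & \cdots & 0\end{bmatrix},$$ with one block row/column of size $q$ followed by $n$ block rows/columns of size $p$. Then $D$ and $C \oplus 0_{(n-1)(p-q)}$ are cospectral.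
   Context: For matrices $X,Y$, $X\oplus Y$ denotes the block diagonal matrix $\begin{bmatrix} X&0\\0&Y\end{bmatrix}$; $0_m$ is the $m\times m$ zero matrix, and $0$ denotes a zero matrix of appropriate size. Two square matrices are cospectral if they have the same eigenvalues with the same multiplicities (i.e. the same characteristic polynomial). *)

theory Defs
  imports "Jordan_Normal_Form.Char_Poly"
begin

definition direct_sum :: "'a::zero mat \<Rightarrow> 'a mat \<Rightarrow> 'a mat" where
  "direct_sum X Y = four_block_mat X (0\<^sub>m (dim_row X) (dim_col Y)) (0\<^sub>m (dim_row Y) (dim_col X)) Y"

definition cospectral :: "'a::comm_ring_1 mat \<Rightarrow> 'a mat \<Rightarrow> bool" where
  "cospectral X Y \<longleftrightarrow> X \<in> carrier_mat (dim_row X) (dim_row X) \<and>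
      Y \<in> carrier_mat (dim_row Y) (dim_row Y) \<and> char_poly X = char_poly Y"

definition blockC :: "nat \<Rightarrow> nat \<Rightarrow> nat \<Rightarrow> 'a::zero mat \<Rightarrow> 'a mat" where
  "blockC n p q B = mat (n*q+p) (n*q+p) (\<lambda>(i,j).
      if i < p \<and> p \<le> j then B $$ (i, (j-p) mod q)
      else if p \<le> i \<and> j < p then (transpose_mat B) $$ ((i-p) mod q, j)
      else 0)"

definition blockD :: "nat \<Rightarrow> nat \<Rightarrow> nat \<Rightarrow> 'a::zero mat \<Rightarrow> 'a mat" where
  "blockD n p q B = mat (n*p+q) (n*p+q) (\<lambda>(i,j).
      if i < q \<and> q \<le> j then (transpose_mat B) $$ (i, (j-q) mod p)
      else if q \<le> i \<and> j < q then B $$ ((i-q) mod p, j)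
      else 0)"

end

theory Submission
  imports Defs
begin


lemma schur1:
  fixes M N :: "real mat" and x y :: real
  assumes M: "M \<in> carrier_mat a b" and N: "N \<in> carrier_mat b a" and x: "x \<noteq> 0"
  shows "det (four_block_mat (x \<cdot>\<^sub>m 1\<^sub>m a) M N (y \<cdot>\<^sub>m 1\<^sub>m b))
        = x ^ a * det (y \<cdot>\<^sub>m 1\<^sub>m b - (1/x) \<cdot>\<^sub>m (N * M))"
proof -
  let ?A = "four_block_mat (x \<cdot>\<^sub>m 1\<^sub>m a) M N (y \<cdot>\<^sub>m 1\<^sub>m b)"
  let ?T = "four_block_mat (1\<^sub>m a) (-(1/x) \<cdot>\<^sub>m M) (0\<^sub>m b a) (1\<^sub>m b)"
  have A: "?A \<in> carrier_mat (a+b) (a+b)" using M N by auto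
  have T: "?T \<in> carrier_mat (a+b) (a+b)" using M N by auto
  have c1: "x \<cdot>\<^sub>m 1\<^sub>m a \<in> carrier_mat a a" and c2: "y \<cdot>\<^sub>m 1\<^sub>m b \<in> carrier_mat b b"
    and c3: "1\<^sub>m a \<in> carrier_mat a a" and c4: "-(1/x) \<cdot>\<^sub>m M \<in> carrier_mat a b"
    and c5: "0\<^sub>m b a \<in> carrier_mat b a" and c6: "1\<^sub>m b \<in> carrier_mat b b" using M by auto
  have dT: "det ?T = 1"
    by (subst det_four_block_mat_lower_left_zero[of _ a _ b], insert M, auto)
  have "?A * ?T = four_block_mat (x \<cdot>\<^sub>m 1\<^sub>m a) (0\<^sub>m a b) N (y \<cdot>\<^sub>m 1\<^sub>m b - (1/x) \<cdot>\<^sub>m (N * M))"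
    apply (subst mult_four_block_mat[OF c1 M N c2 c3 c4 c5 c6])
    apply (rule cong_four_block_mat, insert M N x, auto)
    done
  then have "det (?A * ?T) = x ^ a * det (y \<cdot>\<^sub>m 1\<^sub>m b - (1/x) \<cdot>\<^sub>m (N * M))"
    apply (simp only:)
    apply (subst det_four_block_mat_upper_right_zero[OF c1 refl N])
    using M N by auto
  moreover have "det (?A * ?T) = det ?A" using det_mult[OF A T] dT by simp
  ultimately show ?thesis by simp
qed

lemma schur2:
  fixes M N :: "real mat" and x y :: real
  assumes M: "M \<in> carrier_mat a b" and N: "N \<in> carrier_mat b a" and y: "y \<noteq> 0"
  shows "det (four_block_mat (x \<cdot>\<^sub>m 1\<^sub>m a) M N (y \<cdot>\<^sub>m 1\<^sub>m b))
        = y ^ b * det (x \<cdot>\<^sub>m 1\<^sub>m a - (1/y) \<cdot>\<^sub>m (M * N))"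
proof -
  let ?A = "four_block_mat (x \<cdot>\<^sub>m 1\<^sub>m a) M N (y \<cdot>\<^sub>m 1\<^sub>m b)"
  let ?T = "four_block_mat (1\<^sub>m a) (0\<^sub>m a b) (-(1/y) \<cdot>\<^sub>m N) (1\<^sub>m b)"
  have A: "?A \<in> carrier_mat (a+b) (a+b)" using M N by auto
  have T: "?T \<in> carrier_mat (a+b) (a+b)" using M N by auto
  have c1: "x \<cdot>\<^sub>m 1\<^sub>m a \<in> carrier_mat a a" and c2: "y \<cdot>\<^sub>m 1\<^sub>m b \<in> carrier_mat b b"
    and c3: "1\<^sub>m a \<in> carrier_mat a a" and c4: "-(1/y) \<cdot>\<^sub>m N \<in> carrier_mat b a"
    and c5: "0\<^sub>m a b \<in> carrier_mat a b" and c6: "1\<^sub>m b \<in> carrier_mat b b"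
    and c7: "x \<cdot>\<^sub>m 1\<^sub>m a - (1/y) \<cdot>\<^sub>m (M * N) \<in> carrier_mat a a" using M N by auto
  have dT: "det ?T = 1"
    by (subst det_four_block_mat_upper_right_zero[of _ a _ b], insert N, auto)
  have "?A * ?T = four_block_mat (x \<cdot>\<^sub>m 1\<^sub>m a - (1/y) \<cdot>\<^sub>m (M * N)) M (0\<^sub>m b a) (y \<cdot>\<^sub>m 1\<^sub>m b)"
    apply (subst mult_four_block_mat[OF c1 M N c2 c3 c5 c4 c6])
    apply (rule cong_four_block_mat, insert M N y, auto)
    done
  then have "det (?A * ?T) = y ^ b * det (x \<cdot>\<^sub>m 1\<^sub>m a - (1/y) \<cdot>\<^sub>m (M * N))"
    apply (simp only:)
    apply (subst det_four_block_mat_lower_left_zero[OF c7 M refl c2])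
    using M N by auto
  moreover have "det (?A * ?T) = det ?A" using det_mult[OF A T] dT by simp
  ultimately show ?thesis by simp
qed

lemma charpoly_eval:
  fixes A :: "real mat"
  assumes A: "A \<in> carrier_mat n n"
  shows "poly (char_poly A) k = det (k \<cdot>\<^sub>m 1\<^sub>m n - A)"
proof -
  have "- (char_matrix A k) = k \<cdot>\<^sub>m 1\<^sub>m n - A"
    by (rule eq_matI, insert A, auto simp: char_matrix_def)
  then show ?thesis using char_poly_matrix[OF A] by simp
qed

lemma sum_mod_rep:
  fixes f :: "nat \<Rightarrow> real"
  shows "(\<Sum>i<n*p. f (i mod p)) = real n * (\<Sum>i<p. f i)"
proof (induction n)
  case 0
  then show ?case by simp
next
  case (Suc n)
  have "(\<Sum>i<Suc n*p. f (i mod p)) = (\<Sum>i\<in>{0..<n*p+p}. f (i mod p))"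
    by (simp add: lessThan_atLeast0 add.commute)
  also have "\<dots> = (\<Sum>i\<in>{0..<n*p}. f (i mod p)) + (\<Sum>i\<in>{n*p..<n*p+p}. f (i mod p))"
    by (rule sum.atLeastLessThan_concat[symmetric], auto)
  also have "(\<Sum>i\<in>{n*p..<n*p+p}. f (i mod p)) = (\<Sum>i\<in>{0..<p}. f ((i + n*p) mod p))"
    using sum.shift_bounds_nat_ivl[of "\<lambda>i. f (i mod p)" 0 "n*p" p] by (simp add: add.commute)
  also have "\<dots> = (\<Sum>i<p. f i)"
    by (simp add: lessThan_atLeast0)
  finally show ?case using Suc by (simp add: lessThan_atLeast0 algebra_simps)
qed


definition Xm :: "nat \<Rightarrow> nat \<Rightarrow> nat \<Rightarrow> real mat \<Rightarrow> real mat" where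
  "Xm n p q B = mat (n*p) q (\<lambda>(i,j). B $$ (i mod p, j))"
definition Ym :: "nat \<Rightarrow> nat \<Rightarrow> nat \<Rightarrow> real mat \<Rightarrow> real mat" where
  "Ym n p q B = mat p (n*q) (\<lambda>(i,j). B $$ (i, j mod q))"

lemma XtX:
  assumes B: "B \<in> carrier_mat p q" and p: "p > 0"
  shows "transpose_mat (Xm n p q B) * Xm n p q B = real n \<cdot>\<^sub>m (transpose_mat B * B)"
proof (rule eq_matI)
  fix i j assume i: "i < dim_row (real n \<cdot>\<^sub>m (transpose_mat B * B))"
    and j: "j < dim_col (real n \<cdot>\<^sub>m (transpose_mat B * B))"
  have "(transpose_mat (Xm n p q B) * Xm n p q B) $$ (i,j) = (\<Sum>k<n*p. (\<lambda>k. B $$ (k,i) * B $$ (k,j)) (k mod p))"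
    using i j B p by (auto simp: Xm_def scalar_prod_def lessThan_atLeast0 intro!: sum.cong)
  also have "\<dots> = real n * (\<Sum>k<p. B $$ (k,i) * B $$ (k,j))" by (rule sum_mod_rep)
  also have "\<dots> = (real n \<cdot>\<^sub>m (transpose_mat B * B)) $$ (i,j)"
    using i j B by (auto simp: scalar_prod_def lessThan_atLeast0 intro!: sum.cong)
  finally show "(transpose_mat (Xm n p q B) * Xm n p q B) $$ (i,j) = (real n \<cdot>\<^sub>m (transpose_mat B * B)) $$ (i,j)" .
qed (use B in \<open>auto simp: Xm_def\<close>)

lemma YYt:
  assumes B: "B \<in> carrier_mat p q" and q: "q > 0"
  shows "Ym n p q B * transpose_mat (Ym n p q B) = real n \<cdot>\<^sub>m (B * transpose_mat B)"
proof (rule eq_matI)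
  fix i j assume i: "i < dim_row (real n \<cdot>\<^sub>m (B * transpose_mat B))"
    and j: "j < dim_col (real n \<cdot>\<^sub>m (B * transpose_mat B))"
  have "(Ym n p q B * transpose_mat (Ym n p q B)) $$ (i,j) = (\<Sum>k<n*q. (\<lambda>k. B $$ (i,k) * B $$ (j,k)) (k mod q))"
    using i j B q by (auto simp: Ym_def scalar_prod_def lessThan_atLeast0 intro!: sum.cong)
  also have "\<dots> = real n * (\<Sum>k<q. B $$ (i,k) * B $$ (j,k))" by (rule sum_mod_rep)
  also have "\<dots> = (real n \<cdot>\<^sub>m (B * transpose_mat B)) $$ (i,j)"
    using i j B by (auto simp: scalar_prod_def lessThan_atLeast0 intro!: sum.cong)
  finally show "(Ym n p q B * transpose_mat (Ym n p q B)) $$ (i,j) = (real n \<cdot>\<^sub>m (B * transpose_mat B)) $$ (i,j)" .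
qed (use B in \<open>auto simp: Ym_def\<close>)

lemma D_block:
  assumes B: "B \<in> carrier_mat p q" and p: "p > 0"
  shows "k \<cdot>\<^sub>m 1\<^sub>m (n*p+q) - blockD n p q B
    = four_block_mat (k \<cdot>\<^sub>m 1\<^sub>m q) (-(transpose_mat (Xm n p q B))) (-(Xm n p q B)) (k \<cdot>\<^sub>m 1\<^sub>m (n*p))"
  by (rule eq_matI, insert B p, auto simp: blockD_def Xm_def)

lemma C_block:
  assumes B: "B \<in> carrier_mat p q" and q: "q > 0"
  shows "k \<cdot>\<^sub>m 1\<^sub>m (n*q+p) - blockC n p q B
    = four_block_mat (k \<cdot>\<^sub>m 1\<^sub>m p) (-(Ym n p q B)) (-(transpose_mat (Ym n p q B))) (k \<cdot>\<^sub>m 1\<^sub>m (n*q))"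
  by (rule eq_matI, insert B q, auto simp: blockC_def Ym_def)

lemma DS_block:
  fixes k :: real
  assumes A: "A \<in> carrier_mat a a"
  shows "k \<cdot>\<^sub>m 1\<^sub>m (a+m) - direct_sum A (0\<^sub>m m m)
    = four_block_mat (k \<cdot>\<^sub>m 1\<^sub>m a - A) (0\<^sub>m a m) (0\<^sub>m m a) (k \<cdot>\<^sub>m 1\<^sub>m m)"
  by (rule eq_matI, insert A, auto simp: direct_sum_def)


theorem theorem3p2:
  fixes B :: "real mat" and n p q :: nat
  assumes "q \<ge> 1" and "p \<ge> q" and "n \<ge> 1"
    and "B \<in> carrier_mat p q"
  shows "cospectral (blockD n p q B)
           (direct_sum (blockC n p q B) (0\<^sub>m ((n-1)*(p-q)) ((n-1)*(p-q))))"
proof -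
  have B: "B \<in> carrier_mat p q" using assms by simp
  have q0: "q > 0" and p0: "p > 0" using assms by auto
  define m where "m = (n-1)*(p-q)"
  have dimeq: "n*q+p+m = n*p+q"
  proof -
    obtain n' where n': "n = Suc n'" using assms by (cases n) auto
    obtain r where r: "p = q + r" using assms le_Suc_ex by blast
    show ?thesis unfolding m_def n' r by (simp add: algebra_simps)
  qed
  let ?D = "blockD n p q B"
  let ?C = "blockC n p q B"
  let ?E = "direct_sum ?C (0\<^sub>m m m)"
  have Dc: "?D \<in> carrier_mat (n*p+q) (n*p+q)" by (simp add: blockD_def)
  have Cc: "?C \<in> carrier_mat (n*q+p) (n*q+p)" by (simp add: blockC_def)
  have Ec: "?E \<in> carrier_mat (n*q+p+m) (n*q+p+m)" using Cc by (auto simp: direct_sum_def)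
  have X: "Xm n p q B \<in> carrier_mat (n*p) q" by (simp add: Xm_def)
  have Y: "Ym n p q B \<in> carrier_mat p (n*q)" by (simp add: Ym_def)
  have key: "poly (char_poly ?D) k = poly (char_poly ?E) k" if k: "k \<noteq> 0" for k
  proof -
    define S where "S = det (k \<cdot>\<^sub>m 1\<^sub>m q - (1/k) \<cdot>\<^sub>m (real n \<cdot>\<^sub>m (transpose_mat B * B)))"
    define P where "P = det (k \<cdot>\<^sub>m 1\<^sub>m p - (1/k) \<cdot>\<^sub>m (real n \<cdot>\<^sub>m (B * transpose_mat B)))"
    have "poly (char_poly ?D) k = det (k \<cdot>\<^sub>m 1\<^sub>m (n*p+q) - ?D)" by (rule charpoly_eval[OF Dc])
    also have "\<dots> = k ^ (n*p) * det (k \<cdot>\<^sub>m 1\<^sub>m q - (1/k) \<cdot>\<^sub>m (- transpose_mat (Xm n p q B) * - Xm n p q B))"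
      unfolding D_block[OF B p0] by (rule schur2, insert X k, auto)
    also have "- transpose_mat (Xm n p q B) * - Xm n p q B = real n \<cdot>\<^sub>m (transpose_mat B * B)"
      using X XtX[OF B p0] by simp
    finally have eD: "poly (char_poly ?D) k = k ^ (n*p) * S" unfolding S_def .
    have "poly (char_poly ?E) k = det (k \<cdot>\<^sub>m 1\<^sub>m (n*q+p+m) - ?E)" by (rule charpoly_eval[OF Ec])
    also have "\<dots> = det (k \<cdot>\<^sub>m 1\<^sub>m (n*q+p) - ?C) * k ^ m"
      unfolding DS_block[OF Cc]
      by (subst det_four_block_mat_upper_right_zero[of _ "n*q+p" _ m], insert Cc, auto)
    also have "det (k \<cdot>\<^sub>m 1\<^sub>m (n*q+p) - ?C) = k ^ (n*q) * det (k \<cdot>\<^sub>m 1\<^sub>m p - (1/k) \<cdot>\<^sub>m (- Ym n p q B * - transpose_mat (Ym n p q B)))"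
      unfolding C_block[OF B q0] by (rule schur2, insert Y k, auto)
    also have "- Ym n p q B * - transpose_mat (Ym n p q B) = real n \<cdot>\<^sub>m (B * transpose_mat B)"
      using Y YYt[OF B q0] by simp
    finally have eE: "poly (char_poly ?E) k = k ^ (n*q) * P * k ^ m" unfolding P_def .
    have M1: "- B \<in> carrier_mat p q" using B by simp
    have N1: "- (real n \<cdot>\<^sub>m transpose_mat B) \<in> carrier_mat q p" using B by simp
    have "k ^ p * det (k \<cdot>\<^sub>m 1\<^sub>m q - (1/k) \<cdot>\<^sub>m (- (real n \<cdot>\<^sub>m transpose_mat B) * - B))
        = k ^ q * det (k \<cdot>\<^sub>m 1\<^sub>m p - (1/k) \<cdot>\<^sub>m (- B * - (real n \<cdot>\<^sub>m transpose_mat B)))"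
      using schur1[OF M1 N1 k, of k] schur2[OF M1 N1 k, of k] by simp
    moreover have "- (real n \<cdot>\<^sub>m transpose_mat B) * - B = real n \<cdot>\<^sub>m (transpose_mat B * B)"
      using B by (simp add: mult_smult_assoc_mat[of _ q p _ q])
    moreover have "- B * - (real n \<cdot>\<^sub>m transpose_mat B) = real n \<cdot>\<^sub>m (B * transpose_mat B)"
      using B apply (simp add: mult_smult_distrib[of _ p q _ p])
      by (rule eq_matI) auto
    ultimately have syl: "k ^ p * S = k ^ q * P" unfolding S_def P_def by simp
    have "k ^ q * poly (char_poly ?E) k = k ^ (n*q) * k ^ m * (k ^ q * P)"
      using eE by (simp add: algebra_simps)
    also have "\<dots> = k ^ (n*q + m + p) * S" using syl by (simp add: power_add algebra_simps)
    also have "\<dots> = k ^ q * (k ^ (n*p) * S)" using dimeq by (simp add: power_add algebra_simps)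
    finally have "k ^ q * poly (char_poly ?E) k = k ^ q * poly (char_poly ?D) k" using eD by simp
    then show ?thesis using k by simp
  qed
  have "char_poly ?D = char_poly ?E"
  proof (rule ccontr)
    assume ne: "char_poly ?D \<noteq> char_poly ?E"
    let ?f = "char_poly ?D - char_poly ?E"
    have "{k. k \<noteq> (0::real)} \<subseteq> {k. poly ?f k = 0}" using key by auto
    moreover have "finite {k. poly ?f k = 0}" using ne by (intro poly_roots_finite) simp
    ultimately have "finite {k. k \<noteq> (0::real)}" by (rule finite_subset)
    moreover have "infinite {k. k \<noteq> (0::real)}"
    proof
      assume "finite {k. k \<noteq> (0::real)}"
      then have "finite (insert 0 {k. k \<noteq> (0::real)})" by simp
      moreover have "insert 0 {k. k \<noteq> (0::real)} = UNIV" by auto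
      ultimately show False by (simp add: infinite_UNIV_char_0)
    qed
    ultimately show False by simp
  qed
  then show ?thesis unfolding cospectral_def m_def[symmetric] using Dc Ec dimeq by simp
qed

end
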